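(* Let $\mathcal P=\{a\otimes b:\ a\in\Delta^3,\ b\in\Delta^4\}$, where $(a\otimes b)_{(r,s)}=a_rb_s$. Let $W=a\otimes b\in\mathcal P$. If the AdaBoost step on $M_0$ from $W$ selects a column $A_j$, then the updated state is $W'=a'\otimes b$, where $a'$ is the one-step AdaBoost update of $a$ on $L_A$ using column $j$, i.e. $a'_r=a_r/(1+\mu(L_A)_{rj})$ with $\mu=(a^\top L_A)_j$. If it selects a column $B_j$, then $W'=a\otimes b'$, where $b'$ is the one-step update of $b$ on $L_B$ using column $j$. Hence $\mathcal P$ is invariant under the exhaustive AdaBoost dynamics on $M_0$.
   Context: Let $$L_A=\begin{pmatrix}1&1&-1&-1\\-1&1&1&1\\1&-1&-1&1\\1&-1&1&-1\end{pmatrix},\qquad L_B=\begin{pmatrix}1&1&-1&-1\\-1&1&1&1\\1&-1&-1&1\\1&-1&1&-1\\1&-1&1&1\end{pmatrix}.$$ The $20\times 8$ matrix $M_0$ has rows indexed by $(r,s)\in\{1,\dots,4\}\times\{1,\dots,5\}$ and columns $A_1,\dots,A_4,B_1,\dots,B_4$, with $M_0((r,s),A_j)=(L_A)_{rj}$, $M_0((r,s),B_j)=(L_B)_{sj}$. Exhaustive AdaBoost on a matrix $M\in\{-1,+1\}^{m\times N}$ maps $D\in\Delta^{m-1}$ to $D'$ with $D'(i)=D(i)/(1+r M_{ij^*})$, where $j^*=\min\operatorname{argmax}_j (D^\top M)_j$ and $r=(D^\top M)_{j^*}$. The one-step update of a distribution $u$ on the rows of a sign matrix $L$ using column $j$ is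 $u'_i=u_i/(1+\mu L_{ij})$ with $\mu=(u^\top L)_j$. $\Delta^{k}$ denotes the probability simplex in $\mathbb R^{k+1}$. *)

theory Defs
  imports Main Complex_Main
begin

text \<open>All indices are 1-based, as in the paper.  Row index r of L_A ranges over {1..4},
  row index s of L_B over {1..5}; column index j over {1..4}.\<close>

definition LA :: "nat \<Rightarrow> nat \<Rightarrow> real" where
  "LA r j = [[1,1,-1,-1],[-1,1,1,1],[1,-1,-1,1],[1,-1,1,-1]] ! (r - 1) ! (j - 1)"

definition LB :: "nat \<Rightarrow> nat \<Rightarrow> real" where
  "LB s j = [[1,1,-1,-1],[-1,1,1,1],[1,-1,-1,1],[1,-1,1,-1],[1,-1,1,1]] ! (s - 1) ! (j - 1)"

text \<open>Rows of M0: pairs (r,s).  Columns of M0 are numbered 1..8: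
  column j (1 \<le> j \<le> 4) is A_j, column 4+j (1 \<le> j \<le> 4) is B_j.\<close>

definition rows0 :: "(nat \<times> nat) set" where
  "rows0 = {1..4} \<times> {1..5}"

definition cols0 :: "nat set" where
  "cols0 = {1..8}"

definition M0 :: "nat \<times> nat \<Rightarrow> nat \<Rightarrow> real" where
  "M0 i c = (if c \<le> 4 then LA (fst i) c else LB (snd i) (c - 4))"

definition simplex :: "'a set \<Rightarrow> ('a \<Rightarrow> real) set" where
  "simplex I = {u. (\<forall>i\<in>I. 0 \<le> u i) \<and> (\<Sum>i\<in>I. u i) = 1}"

definition edge0 :: "(nat \<times> nat \<Rightarrow> real) \<Rightarrow> nat \<Rightarrow> real" where
  "edge0 D j = (\<Sum>i\<in>rows0. D i * M0 i j)"

definition jstar :: "(nat \<times> nat \<Rightarrow> real) \<Rightarrow> nat" where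
  "jstar D = (LEAST j. j \<in> cols0 \<and> (\<forall>k\<in>cols0. edge0 D k \<le> edge0 D j))"

definition ada_step :: "(nat \<times> nat \<Rightarrow> real) \<Rightarrow> (nat \<times> nat \<Rightarrow> real)" where
  "ada_step D = (let j = jstar D; r = edge0 D j in (\<lambda>i. D i / (1 + r * M0 i j)))"

definition one_step :: "(nat \<Rightarrow> nat \<Rightarrow> real) \<Rightarrow> nat set \<Rightarrow> (nat \<Rightarrow> real) \<Rightarrow> nat \<Rightarrow> (nat \<Rightarrow> real)" where
  "one_step L R u j = (let \<mu> = (\<Sum>i\<in>R. u i * L i j) in (\<lambda>i. u i / (1 + \<mu> * L i j)))"

definition tensor :: "(nat \<Rightarrow> real) \<Rightarrow> (nat \<Rightarrow> real) \<Rightarrow> (nat \<times> nat \<Rightarrow> real)" where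
  "tensor a b = (\<lambda>(r, s). a r * b s)"

definition inP :: "(nat \<times> nat \<Rightarrow> real) \<Rightarrow> bool" where
  "inP W \<longleftrightarrow> (\<exists>a\<in>simplex {1..4}. \<exists>b\<in>simplex {1..5}. \<forall>i\<in>rows0. W i = tensor a b i)"

end

theory Submission
  imports Defs
begin

lemma s4: "(\<Sum>r\<in>{1..4::nat}. f r) = f 1 + f 2 + f 3 + (f 4::real)"
  by (simp add: eval_nat_numeral)
lemma s5: "(\<Sum>r\<in>{1..5::nat}. f r) = f 1 + f 2 + f 3 + f 4 + (f 5::real)"
  by (simp add: eval_nat_numeral)

lemma edgeA:
  assumes "b \<in> simplex {1..5}" "j \<le> 4"
  shows "edge0 (tensor a b) j = (\<Sum>r\<in>{1..4}. a r * LA r j)"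
proof -
  have "edge0 (tensor a b) j = (\<Sum>r\<in>{1..4}. \<Sum>s\<in>{1..5}. a r * b s * LA r j)"
    unfolding edge0_def rows0_def tensor_def M0_def using assms(2)
    by (simp add: sum.cartesian_product case_prod_beta mult_ac)
  also have "\<dots> = (\<Sum>r\<in>{1..4}. a r * LA r j * (\<Sum>s\<in>{1..5}. b s))"
    by (simp add: sum_distrib_left mult_ac)
  finally show ?thesis using assms(1) by (simp add: simplex_def)
qed

lemma edgeB:
  assumes "a \<in> simplex {1..4}" "j > 4"
  shows "edge0 (tensor a b) j = (\<Sum>s\<in>{1..5}. b s * LB s (j-4))"
proof -
  have "edge0 (tensor a b) j = (\<Sum>r\<in>{1..4}. \<Sum>s\<in>{1..5}. a r * (b s * LB s (j-4)))"
    unfolding edge0_def rows0_def tensor_def M0_def using assms(2)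
    by (simp add: sum.cartesian_product case_prod_beta mult_ac)
  also have "\<dots> = (\<Sum>r\<in>{1..4}. a r * (\<Sum>s\<in>{1..5}. b s * LB s (j-4)))"
    by (simp add: sum_distrib_left)
  also have "\<dots> = (\<Sum>r\<in>{1..4}. a r) * (\<Sum>s\<in>{1..5}. b s * LB s (j-4))"
    by (simp add: sum_distrib_right)
  finally show ?thesis using assms(1) by (simp add: simplex_def)
qed

lemma jstar_in: "jstar D \<in> cols0"
proof -
  have fin: "finite (edge0 D ` cols0)" "edge0 D ` cols0 \<noteq> {}" by (auto simp: cols0_def)
  obtain j where j: "j \<in> cols0" "edge0 D j = Max (edge0 D ` cols0)"
    using Max_in[OF fin] by auto
  have "j \<in> cols0 \<and> (\<forall>k\<in>cols0. edge0 D k \<le> edge0 D j)"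
    using j fin by auto
  then show ?thesis unfolding jstar_def
    using LeastI[of "\<lambda>j. j \<in> cols0 \<and> (\<forall>k\<in>cols0. edge0 D k \<le> edge0 D j)" j] by blast
qed

lemma LA_pm: "r \<in> {1..4} \<Longrightarrow> j \<in> {1..4} \<Longrightarrow> LA r j = 1 \<or> LA r j = -1"
  by (auto simp: LA_def eval_nat_numeral le_Suc_eq)
lemma LB_pm: "r \<in> {1..5} \<Longrightarrow> j \<in> {1..4} \<Longrightarrow> LB r j = 1 \<or> LB r j = -1"
  by (auto simp: LB_def eval_nat_numeral le_Suc_eq)

lemma mu_bound:
  assumes "u \<in> simplex I" "finite I" "\<forall>r\<in>I. L r = 1 \<or> L r = -1"
  shows "\<bar>(\<Sum>r\<in>I. u r * L r)\<bar> \<le> 1"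
proof -
  have "\<bar>(\<Sum>r\<in>I. u r * L r)\<bar> \<le> (\<Sum>r\<in>I. \<bar>u r * L r\<bar>)" by (rule sum_abs)
  also have "\<dots> = (\<Sum>r\<in>I. u r)"
    using assms by (intro sum.cong) (auto simp: simplex_def abs_mult)
  finally show ?thesis using assms by (simp add: simplex_def)
qed

lemma one_step_nonneg:
  assumes "u \<in> simplex I" "finite I" "\<forall>r\<in>I. L r j = 1 \<or> L r j = -1" "q \<in> I"
  shows "0 \<le> one_step L I u j q"
proof -
  have m: "\<bar>(\<Sum>r\<in>I. u r * L r j)\<bar> \<le> 1" using mu_bound[of u I "\<lambda>r. L r j"] assms by simp
  have "0 \<le> 1 + (\<Sum>r\<in>I. u r * L r j) * L q j"
    using assms(3,4) m by (cases "L q j = 1") (auto simp: abs_le_iff)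
  then show ?thesis using assms unfolding one_step_def Let_def simplex_def
    by (auto intro!: divide_nonneg_nonneg)
qed

lemma sum_one:
  assumes "u \<in> simplex I" "finite I" "\<forall>r\<in>I. L r = 1 \<or> L r = -1"
    and p: "1 + (\<Sum>r\<in>I. u r * L r) \<noteq> 0" and m: "1 - (\<Sum>r\<in>I. u r * L r) \<noteq> 0"
  shows "(\<Sum>q\<in>I. u q / (1 + (\<Sum>r\<in>I. u r * L r) * L q)) = 1"
proof -
  define mu where "mu = (\<Sum>r\<in>I. u r * L r)"
  have d: "1 - mu^2 \<noteq> 0"
  proof -
    have "1 - mu^2 = (1+mu)*(1-mu)" by (simp add: algebra_simps power2_eq_square)
    then show ?thesis using p m unfolding mu_def by simp
  qed
  have "\<forall>q\<in>I. u q / (1 + mu * L q) = (u q - mu * (u q * L q)) / (1 - mu^2)"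
  proof
    fix q assume q: "q \<in> I"
    show "u q / (1 + mu * L q) = (u q - mu * (u q * L q)) / (1 - mu^2)"
      using assms(3) q p m d unfolding mu_def[symmetric]
      by (cases "L q = 1") (auto simp: field_simps power2_eq_square)
  qed
  then have "(\<Sum>q\<in>I. u q / (1 + mu * L q)) = (\<Sum>q\<in>I. (u q - mu * (u q * L q)) / (1 - mu^2))"
    by (intro sum.cong) auto
  also have "\<dots> = ((\<Sum>q\<in>I. u q) - mu * mu) / (1 - mu^2)"
    by (simp add: sum_divide_distrib[symmetric] sum_subtractf sum_distrib_left[symmetric] mu_def)
  also have "\<dots> = 1" using assms(1) d by (simp add: simplex_def power2_eq_square)
  finally show ?thesis by (simp add: mu_def)
qed

lemma witA: "j \<in> {1..4} \<Longrightarrow> (\<exists>q\<in>{1..4}. LA q j = 1) \<and> (\<exists>q\<in>{1..4}. LA q j = -1)"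
proof -
  assume "j \<in> {1..4}"
  then have "j = 1 \<or> j = 2 \<or> j = 3 \<or> j = 4" by auto
  then show ?thesis
    apply (elim disjE)
    subgoal by (rule conjI; rule bexI[of _ 1] bexI[of _ 2]) (auto simp: LA_def)
    subgoal by (rule conjI; rule bexI[of _ 1] bexI[of _ 3]) (auto simp: LA_def)
    subgoal by (rule conjI; rule bexI[of _ 2] bexI[of _ 1]) (auto simp: LA_def)
    subgoal by (rule conjI; rule bexI[of _ 2] bexI[of _ 1]) (auto simp: LA_def)
    done
qed

lemma LA_LB: "q \<in> {1..4} \<Longrightarrow> LB q j = LA q j"
  by (auto simp: LA_def LB_def eval_nat_numeral le_Suc_eq)

lemma simpL:
  assumes a: "a \<in> simplex I" and fin: "finite I" and pm: "\<forall>r\<in>I. L r j = 1 \<or> L r j = -1"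
    and w: "(\<exists>q\<in>I. L q j = 1) \<and> (\<exists>q\<in>I. L q j = -1)"
    and nz: "\<forall>q\<in>I. 1 + (\<Sum>r\<in>I. a r * L r j) * L q j \<noteq> 0"
  shows "one_step L I a j \<in> simplex I"
proof -
  have p: "1 + (\<Sum>r\<in>I. a r * L r j) \<noteq> 0" using w nz by force
  have m: "1 - (\<Sum>r\<in>I. a r * L r j) \<noteq> 0" using w nz by force
  have "(\<Sum>q\<in>I. one_step L I a j q) = 1"
    unfolding one_step_def Let_def using sum_one[OF a fin _ p m] pm by simp
  moreover have "\<forall>q\<in>I. 0 \<le> one_step L I a j q"
    using one_step_nonneg[OF a fin] pm by auto
  ultimately show ?thesis by (simp add: simplex_def)
qed

lemma partA:
  assumes a: "a \<in> simplex {1..4}" and b: "b \<in> simplex {1..5}" and j: "j \<in> {1..4}"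
    and js: "jstar (tensor a b) = j"
  shows "\<forall>i\<in>rows0. ada_step (tensor a b) i = tensor (one_step LA {1..4} a j) b i"
proof
  fix i assume "i \<in> rows0"
  obtain r s where i: "i = (r, s)" by force
  have e: "edge0 (tensor a b) j = (\<Sum>r\<in>{1..4}. a r * LA r j)" using edgeA[OF b] j by auto
  show "ada_step (tensor a b) i = tensor (one_step LA {1..4} a j) b i"
    unfolding ada_step_def Let_def js e using j
    by (simp add: i tensor_def one_step_def M0_def)
qed

lemma partB:
  assumes a: "a \<in> simplex {1..4}" and b: "b \<in> simplex {1..5}" and j: "j \<in> {1..4}"
    and js: "jstar (tensor a b) = 4 + j"
  shows "\<forall>i\<in>rows0. ada_step (tensor a b) i = tensor a (one_step LB {1..5} b j) i"
proof
  fix i assume "i \<in> rows0"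
  obtain r s where i: "i = (r, s)" by force
  have e: "edge0 (tensor a b) (4 + j) = (\<Sum>s\<in>{1..5}. b s * LB s j)" using edgeB[OF a, of "4+j" b] j by auto
  show "ada_step (tensor a b) i = tensor a (one_step LB {1..5} b j) i"
    unfolding ada_step_def Let_def js e using j
    by (simp add: i tensor_def one_step_def M0_def)
qed

theorem lemma2:
  fixes a b :: "nat \<Rightarrow> real" and W :: "nat \<times> nat \<Rightarrow> real"
  assumes a: "a \<in> simplex {1..4}" and b: "b \<in> simplex {1..5}"
    and W: "W = tensor a b"
  shows "(\<forall>j\<in>{1..4}. jstar W = j \<longrightarrow>
            (\<forall>i\<in>rows0. ada_step W i = tensor (one_step LA {1..4} a j) b i))
       \<and> (\<forall>j\<in>{1..4}. jstar W = 4 + j \<longrightarrow>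
            (\<forall>i\<in>rows0. ada_step W i = tensor a (one_step LB {1..5} b j) i))
       \<and> ((\<forall>i\<in>rows0. 1 + edge0 W (jstar W) * M0 i (jstar W) \<noteq> 0) \<longrightarrow> inP (ada_step W))"
proof (intro conjI impI)
  show "\<forall>j\<in>{1..4}. jstar W = j \<longrightarrow>
            (\<forall>i\<in>rows0. ada_step W i = tensor (one_step LA {1..4} a j) b i)"
    using partA[OF a b] W by blast
  show "\<forall>j\<in>{1..4}. jstar W = 4 + j \<longrightarrow>
            (\<forall>i\<in>rows0. ada_step W i = tensor a (one_step LB {1..5} b j) i)"
    using partB[OF a b] W by blast
  assume nz: "\<forall>i\<in>rows0. 1 + edge0 W (jstar W) * M0 i (jstar W) \<noteq> 0"
  define c where "c = jstar W"
  have c: "c \<in> {1..8}" using jstar_in[of W] by (simp add: c_def cols0_def)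
  show "inP (ada_step W)"
  proof (cases "c \<le> 4")
    case True
    then have j: "c \<in> {1..4}" using c by auto
    have e: "edge0 W c = (\<Sum>r\<in>{1..4}. a r * LA r c)" using edgeA[OF b] True W by auto
    have nzq: "\<forall>q\<in>{1..4}. 1 + (\<Sum>r\<in>{1..4}. a r * LA r c) * LA q c \<noteq> 0"
    proof
      fix q :: nat assume q: "q \<in> {1..4}"
      have "(q, 1) \<in> rows0" using q by (simp add: rows0_def)
      then show "1 + (\<Sum>r\<in>{1..4}. a r * LA r c) * LA q c \<noteq> 0"
        using nz True unfolding c_def[symmetric] e by (auto simp: M0_def)
    qed
    have s: "one_step LA {1..4} a c \<in> simplex {1..4}"
      by (rule simpL[of a "{1..4}" LA c, OF a _ _ witA[OF j] nzq]) (use LA_pm j in auto)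
    show ?thesis unfolding inP_def
      using s b partA[OF a b j] W c_def by blast
  next
    case False
    define j where "j = c - 4"
    have j: "j \<in> {1..4}" and cj: "c = 4 + j" using c False by (auto simp: j_def)
    have e: "edge0 W c = (\<Sum>s\<in>{1..5}. b s * LB s j)" using edgeB[OF a, of c b] False W cj by auto
    have nzq: "\<forall>q\<in>{1..5}. 1 + (\<Sum>s\<in>{1..5}. b s * LB s j) * LB q j \<noteq> 0"
    proof
      fix q :: nat assume q: "q \<in> {1..5}"
      have "(1, q) \<in> rows0" using q by (simp add: rows0_def)
      then show "1 + (\<Sum>s\<in>{1..5}. b s * LB s j) * LB q j \<noteq> 0"
        using nz False cj unfolding c_def[symmetric] e by (auto simp: M0_def)
    qed
    have w: "(\<exists>q\<in>{1..5}. LB q j = 1) \<and> (\<exists>q\<in>{1..5}. LB q j = -1)"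
    proof -
      obtain q1 q2 where q: "q1 \<in> {1..4}" "LA q1 j = 1" "q2 \<in> {1..4}" "LA q2 j = -1"
        using witA[OF j] by blast
      have "LB q1 j = 1" "LB q2 j = -1" using q LA_LB by auto
      moreover have "q1 \<in> {1..5}" "q2 \<in> {1..5}" using q by auto
      ultimately show ?thesis by blast
    qed
    have s: "one_step LB {1..5} b j \<in> simplex {1..5}"
      by (rule simpL[of b "{1..5}" LB j, OF b _ _ w nzq]) (use LB_pm j in auto)
    show ?thesis unfolding inP_def
      using s a partB[OF a b j] W c_def cj by blast
  qed
qed

end
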